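(* Let $C\in\mathbb{R}^{p\times p}$ be positive definite, $w\in\mathbb{R}^p$, $\mu>0$. For $\tau>0$ let $\hat u_\tau\in(-\mu,\mu)^p$ be the unique real solution of $(\mu^2-u_j^2)[C^{-1}(w-u)]_j-u_j/\tau=0$ ($j=1,\dots,p$), and let $\hat x_\tau=C^{-1}(w-\hat u_\tau)$. Let $\hat u=\lim_{\tau\to\infty}\hat u_\tau$ and $\hat x=C^{-1}(w-\hat u)$, and define $I=\{j:\hat x_j\neq0\}$, $I^c_t=\{j\notin I:|\hat u_j|=\mu\}$ and $I^c_{nt}=\{j\notin I:|\hat u_j|<\mu\}$. Then, as $\tau\to\infty$, $$\tau(\mu^2-\hat u_{\tau,j}^2)^2=\begin{cases}O(\tau^{-1}) & j\in I,\\ O\bigl[(\tau\hat x_{\tau,j}^2)^{-1}\bigr] & j\in I^c_t,\\ O(\tau) & j\in I^c_{nt}.\end{cases}$$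
   Context: Standing facts of the setting: $\hat u_\tau\to\hat u$ as $\tau\to\infty$, where $\hat u$ is the unique minimizer of $(w-u)^TC^{-1}(w-u)$ over the box $\{u\in\mathbb{R}^p:|u_j|\le\mu\ \forall j\}$; then $\hat x=C^{-1}(w-\hat u)$ is the unique minimizer of $H(x)=x^TCx-2w^Tx+2\mu\|x\|_1$, and $\hat x_\tau\to\hat x$. $I$ is the set of nonzero coordinates of $\hat x$; $I^c_t$ are the "transition" coordinates (zero in $\hat x$ but with $|\hat u_j|=\mu$) and $I^c_{nt}$ the non-transition zero coordinates. *)

theory Defs
  imports "HOL-Analysis.Analysis" "HOL-Library.Landau_Symbols"
begin

definition pos_def_matrix :: "real^'n^'n \<Rightarrow> bool" where
  "pos_def_matrix C \<longleftrightarrow> transpose C = C \<and> (\<forall>x. x \<noteq> 0 \<longrightarrow> x \<bullet> (C *v x) > 0)"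

definition solves_tau :: "real^'n^'n \<Rightarrow> real^'n \<Rightarrow> real \<Rightarrow> real \<Rightarrow> real^'n \<Rightarrow> bool" where
  "solves_tau C w \<mu> \<tau> u \<longleftrightarrow>
     (\<forall>j. \<bar>u $ j\<bar> < \<mu>) \<and>
     (\<forall>j. (\<mu>\<^sup>2 - (u $ j)\<^sup>2) * ((matrix_inv C *v (w - u)) $ j) - u $ j / \<tau> = 0)"

end

theory Submission
  imports Defs
begin

lemma key_bound:
  fixes \<tau> \<mu> u x :: real
  assumes t: "\<tau> > 0" and ub: "\<bar>u\<bar> < \<mu>" and eq: "(\<mu>\<^sup>2 - u\<^sup>2) * x - u / \<tau> = 0"
    and x: "x \<noteq> 0"
  shows "\<tau> * (\<mu>\<^sup>2 - u\<^sup>2)\<^sup>2 \<le> \<mu>\<^sup>2 * (1 / (\<tau> * x\<^sup>2))"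
proof -
  have e: "\<mu>\<^sup>2 - u\<^sup>2 = u / (\<tau> * x)" using eq t x by (simp add: field_simps)
  have "\<tau> * (\<mu>\<^sup>2 - u\<^sup>2)\<^sup>2 = u\<^sup>2 * (1 / (\<tau> * x\<^sup>2))"
    unfolding e using t x by (simp add: field_simps power2_eq_square)
  also have "\<dots> \<le> \<mu>\<^sup>2 * (1 / (\<tau> * x\<^sup>2))"
  proof (rule mult_right_mono)
    show "u\<^sup>2 \<le> \<mu>\<^sup>2" using ub by (simp add: abs_le_square_iff less_imp_le abs_le_iff power2_le_iff_abs_le)
    show "0 \<le> 1 / (\<tau> * x\<^sup>2)" using t by simp
  qed
  finally show ?thesis .
qed

theorem lemma2:
  fixes C :: "real^'n^'n" and w :: "real^'n" and \<mu> :: real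
    and uhat :: "real \<Rightarrow> real^'n" and u0 :: "real^'n"
  assumes C: "pos_def_matrix C"
    and mu: "\<mu> > 0"
    and sol: "\<And>\<tau>. \<tau> > 0 \<Longrightarrow> solves_tau C w \<mu> \<tau> (uhat \<tau>)"
    and uniq: "\<And>\<tau> u. \<tau> > 0 \<Longrightarrow> solves_tau C w \<mu> \<tau> u \<Longrightarrow> u = uhat \<tau>"
    and lim: "(uhat \<longlongrightarrow> u0) at_top"
  defines "xhat \<equiv> (\<lambda>\<tau>. matrix_inv C *v (w - uhat \<tau>))"
    and "x0 \<equiv> matrix_inv C *v (w - u0)"
  shows
    "(\<forall>j. x0 $ j \<noteq> 0 \<longrightarrow>
        (\<lambda>\<tau>. \<tau> * (\<mu>\<^sup>2 - (uhat \<tau> $ j)\<^sup>2)\<^sup>2) \<in> O[at_top](\<lambda>\<tau>. 1 / \<tau>))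
   \<and> (\<forall>j. x0 $ j = 0 \<and> \<bar>u0 $ j\<bar> = \<mu> \<longrightarrow>
        (\<lambda>\<tau>. \<tau> * (\<mu>\<^sup>2 - (uhat \<tau> $ j)\<^sup>2)\<^sup>2) \<in> O[at_top](\<lambda>\<tau>. 1 / (\<tau> * (xhat \<tau> $ j)\<^sup>2)))
   \<and> (\<forall>j. x0 $ j = 0 \<and> \<bar>u0 $ j\<bar> < \<mu> \<longrightarrow>
        (\<lambda>\<tau>. \<tau> * (\<mu>\<^sup>2 - (uhat \<tau> $ j)\<^sup>2)\<^sup>2) \<in> O[at_top](\<lambda>\<tau>. \<tau>))"
proof -
  have S: "\<bar>uhat \<tau> $ j\<bar> < \<mu>" "(\<mu>\<^sup>2 - (uhat \<tau> $ j)\<^sup>2) * (xhat \<tau> $ j) - uhat \<tau> $ j / \<tau> = 0"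
    if "\<tau> > 0" for \<tau> j
    using sol[OF that] unfolding solves_tau_def xhat_def by auto
  have KB: "\<tau> * (\<mu>\<^sup>2 - (uhat \<tau> $ j)\<^sup>2)\<^sup>2 \<le> \<mu>\<^sup>2 * (1 / (\<tau> * (xhat \<tau> $ j)\<^sup>2))"
    if "\<tau> > 0" "xhat \<tau> $ j \<noteq> 0" for \<tau> j
    using key_bound[OF that(1) S[OF that(1)] that(2)] .
  have xlim: "((\<lambda>\<tau>. xhat \<tau> $ j) \<longlongrightarrow> x0 $ j) at_top" for j
  proof -
    have "(xhat \<longlongrightarrow> x0) at_top"
      unfolding xhat_def x0_def
      by (intro bounded_linear.tendsto[OF matrix_vector_mul_bounded_linear] tendsto_intros lim)
    then show ?thesis by (rule tendsto_vec_nth)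
  qed
  have ulim: "((\<lambda>\<tau>. uhat \<tau> $ j) \<longlongrightarrow> u0 $ j) at_top" for j
    using lim by (rule tendsto_vec_nth)
  have P1: "(\<lambda>\<tau>. \<tau> * (\<mu>\<^sup>2 - (uhat \<tau> $ j)\<^sup>2)\<^sup>2) \<in> O[at_top](\<lambda>\<tau>. 1 / \<tau>)" if nz: "x0 $ j \<noteq> 0" for j
  proof -
    have ev: "eventually (\<lambda>\<tau>. \<bar>xhat \<tau> $ j\<bar> > \<bar>x0 $ j\<bar> / 2) at_top"
    proof -
      have "((\<lambda>\<tau>. \<bar>xhat \<tau> $ j\<bar>) \<longlongrightarrow> \<bar>x0 $ j\<bar>) at_top" by (intro tendsto_intros xlim)
      moreover have "\<bar>x0 $ j\<bar> / 2 < \<bar>x0 $ j\<bar>" using nz by simp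
      ultimately show ?thesis by (rule order_tendstoD)
    qed
    show ?thesis
    proof (rule bigoI[where c = "\<mu>\<^sup>2 * 4 / (x0 $ j)\<^sup>2"])
      show "eventually (\<lambda>\<tau>. norm (\<tau> * (\<mu>\<^sup>2 - (uhat \<tau> $ j)\<^sup>2)\<^sup>2) \<le> \<mu>\<^sup>2 * 4 / (x0 $ j)\<^sup>2 * norm (1 / \<tau>)) at_top"
        using ev eventually_gt_at_top[of 0]
      proof eventually_elim
        case (elim \<tau>)
        let ?x = "xhat \<tau> $ j" and ?a = "x0 $ j"
        have xn: "?x \<noteq> 0" using elim nz by auto
        have sq: "(?a/2)\<^sup>2 \<le> ?x\<^sup>2"
          using elim(1) by (metis abs_ge_zero abs_of_nonneg order.trans abs_le_square_iff less_imp_le zero_le_divide_iff zero_le_numeral abs_divide abs_numeral)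
        have "1 / (\<tau> * ?x\<^sup>2) \<le> 1 / (\<tau> * (?a/2)\<^sup>2)"
          using elim(2) nz sq by (intro divide_left_mono mult_left_mono mult_pos_pos) auto
        also have "\<dots> = 4 / ?a\<^sup>2 * (1/\<tau>)" by (simp add: field_simps power2_eq_square)
        finally have b: "1 / (\<tau> * ?x\<^sup>2) \<le> 4 / ?a\<^sup>2 * (1/\<tau>)" .
        have "norm (\<tau> * (\<mu>\<^sup>2 - (uhat \<tau> $ j)\<^sup>2)\<^sup>2) = \<tau> * (\<mu>\<^sup>2 - (uhat \<tau> $ j)\<^sup>2)\<^sup>2"
          using elim(2) by simp
        also have "\<dots> \<le> \<mu>\<^sup>2 * (1 / (\<tau> * ?x\<^sup>2))" using KB[OF elim(2) xn] .
        also have "\<dots> \<le> \<mu>\<^sup>2 * (4 / ?a\<^sup>2 * (1/\<tau>))" using b by (intro mult_left_mono) auto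
        also have "\<dots> = \<mu>\<^sup>2 * 4 / (x0 $ j)\<^sup>2 * norm (1 / \<tau>)" using elim(2) by simp
        finally show ?case .
      qed
    qed
  qed
  have P2: "(\<lambda>\<tau>. \<tau> * (\<mu>\<^sup>2 - (uhat \<tau> $ j)\<^sup>2)\<^sup>2) \<in> O[at_top](\<lambda>\<tau>. 1 / (\<tau> * (xhat \<tau> $ j)\<^sup>2))"
    if "\<bar>u0 $ j\<bar> = \<mu>" for j
  proof -
    have ev: "eventually (\<lambda>\<tau>. \<bar>uhat \<tau> $ j\<bar> > \<mu> / 2) at_top"
    proof -
      have "((\<lambda>\<tau>. \<bar>uhat \<tau> $ j\<bar>) \<longlongrightarrow> \<bar>u0 $ j\<bar>) at_top" by (intro tendsto_intros ulim)
      moreover have "\<mu> / 2 < \<bar>u0 $ j\<bar>" using that mu by simp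
      ultimately show ?thesis by (rule order_tendstoD)
    qed
    show ?thesis
    proof (rule bigoI[where c = "\<mu>\<^sup>2"])
      show "eventually (\<lambda>\<tau>. norm (\<tau> * (\<mu>\<^sup>2 - (uhat \<tau> $ j)\<^sup>2)\<^sup>2) \<le> \<mu>\<^sup>2 * norm (1 / (\<tau> * (xhat \<tau> $ j)\<^sup>2))) at_top"
        using ev eventually_gt_at_top[of 0]
      proof eventually_elim
        case (elim \<tau>)
        have un: "uhat \<tau> $ j \<noteq> 0" using elim mu by auto
        have xn: "xhat \<tau> $ j \<noteq> 0"
        proof
          assume "xhat \<tau> $ j = 0"
          with S(2)[OF elim(2), of j] have "uhat \<tau> $ j / \<tau> = 0" by simp
          with un elim(2) show False by simp
        qed
        have "norm (\<tau> * (\<mu>\<^sup>2 - (uhat \<tau> $ j)\<^sup>2)\<^sup>2) = \<tau> * (\<mu>\<^sup>2 - (uhat \<tau> $ j)\<^sup>2)\<^sup>2"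
          using elim(2) by simp
        also have "\<dots> \<le> \<mu>\<^sup>2 * (1 / (\<tau> * (xhat \<tau> $ j)\<^sup>2))" using KB[OF elim(2) xn] .
        also have "\<dots> = \<mu>\<^sup>2 * norm (1 / (\<tau> * (xhat \<tau> $ j)\<^sup>2))" using elim(2) by simp
        finally show ?case .
      qed
    qed
  qed
  have P3: "(\<lambda>\<tau>. \<tau> * (\<mu>\<^sup>2 - (uhat \<tau> $ j)\<^sup>2)\<^sup>2) \<in> O[at_top](\<lambda>\<tau>. \<tau>)" for j
  proof (rule bigoI[where c = "\<mu>^4"])
    show "eventually (\<lambda>\<tau>. norm (\<tau> * (\<mu>\<^sup>2 - (uhat \<tau> $ j)\<^sup>2)\<^sup>2) \<le> \<mu>^4 * norm \<tau>) at_top"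
      using eventually_gt_at_top[of 0]
    proof eventually_elim
      case (elim \<tau>)
      have ub: "\<bar>uhat \<tau> $ j\<bar> < \<mu>" using S(1)[OF elim] .
      have a: "0 \<le> \<mu>\<^sup>2 - (uhat \<tau> $ j)\<^sup>2" "\<mu>\<^sup>2 - (uhat \<tau> $ j)\<^sup>2 \<le> \<mu>\<^sup>2"
        using ub by (auto simp: power2_le_iff_abs_le less_imp_le mu)
      have "(\<mu>\<^sup>2 - (uhat \<tau> $ j)\<^sup>2)\<^sup>2 \<le> (\<mu>\<^sup>2)\<^sup>2" using a by (intro power_mono) auto
      hence "(\<mu>\<^sup>2 - (uhat \<tau> $ j)\<^sup>2)\<^sup>2 \<le> \<mu>^4" by simp
      hence "\<tau> * (\<mu>\<^sup>2 - (uhat \<tau> $ j)\<^sup>2)\<^sup>2 \<le> \<tau> * \<mu>^4" using elim by (intro mult_left_mono) auto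
      then show ?case using elim by (simp add: mult.commute)
    qed
  qed
  show ?thesis using P1 P2 P3 by blast
qed

end
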